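(* Let $(R,\sigma_t)$ be a $\lambda$-ring and let $(P_\alpha)_{\alpha\in A}$ be a (possibly infinite) family of polynomials in $R_{sp}[T]$. Then there is a $\lambda$-ring homomorphism $(R,\sigma_t)\to(R',\sigma'_t)$ together with a family $(x_\alpha)_{\alpha\in A}$ of elements of $R'$ such that (i) $x_\alpha\in R'_{sp}$ for all $\alpha$ and (ii) $P_\alpha(x_\alpha)=0$ in $R'$ for all $\alpha$, which is universal with these properties: for every $\lambda$-ring homomorphism $R\to R''$ and family $(y_\alpha)$ in $R''_{sp}$ with $P_\alpha(y_\alpha)=0$ (coefficients mapped to $R''$), there is a unique $\lambda$-ring homomorphism $R'\to R''$ under $R$ mapping $x_\alpha$ to $y_\alpha$. In particular $(R',(x_\alpha))$ is unique up to isomorphism; it is denoted $R\langle x_\alpha\mid\alpha\in A\rangle$.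
   Context: A $\lambda$-ring is a commutative ring $R$ with unit and a map $\sigma_t:R\to1+tR[[t]]$, $\sigma_t(a)=\sum_{n\ge0}\sigma^n(a)t^n$, with $\sigma_t(0)=1$, $\sigma_t(a+b)=\sigma_t(a)\sigma_t(b)$ and $\sigma_t(a)\equiv1+at\pmod{t^2}$; homomorphisms are ring homomorphisms commuting with $\sigma_t$. Polynomials $P^{m,n}$: with variables $y_1,\dots,y_m$, $x_1,\dots,x_{mn}$ and $h_d$ the $d$-th complete homogeneous symmetric polynomial, $P^{m,n}$ is the polynomial with $h_m(\{y_i\bar x^{\bar n}\})=P^{m,n}(h_1(\bar y),\dots,h_m(\bar y),h_1(\bar x),\dots,h_{mn}(\bar x))$, where $h_m$ is evaluated on the family of all products $y_i\bar x^{\bar n}$ with $\bar x^{\bar n}$ ranging over monomials of total degree $n$ in $x_1,\dots,x_{mn}$. For a $\lambda$-ring $R$: $R_{sp}:=\{a\in R\mid \sigma^m(b\sigma^n(a))=P^{m,n}(\sigma^1(b),\dots,\sigma^m(b),\sigma^1(a),\dots,\sigma^{mn}(a))\ \forall b\in R,\ m,n\in\mathbb{N}\}$. *)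

theory Defs
  imports "HOL-Algebra.Polynomials" "HOL-Library.Multiset"
begin

definition hsym :: "nat \<Rightarrow> 'i set \<Rightarrow> ('i \<Rightarrow> 'r::comm_ring_1) \<Rightarrow> 'r" where
  "hsym d I z = (\<Sum>M\<in>{M. set_mset M \<subseteq> I \<and> size M = d}. \<Prod>i\<in>#M. z i)"

text \<open>Integer multivariate polynomials: coefficient functions on monomials
  (a monomial is a multiset of variable indices), with finite support.\<close>
definition ipoly_eval :: "(nat multiset \<Rightarrow> int) \<Rightarrow> (nat \<Rightarrow> 'r::comm_ring_1) \<Rightarrow> 'r" where
  "ipoly_eval p v = (\<Sum>M\<in>{M. p M \<noteq> 0}. of_int (p M) * (\<Prod>i\<in>#M. v i))"

text \<open>The polynomial P^{m,n}: variables 0..m-1 stand for h_1(y),...,h_m(y),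
  variables m..m+mn-1 stand for h_1(x),...,h_{mn}(x). The identity is required
  as an identity of integer polynomials (equivalently, at all integer points).\<close>
definition Pmn :: "nat \<Rightarrow> nat \<Rightarrow> (nat multiset \<Rightarrow> int)" where
  "Pmn m n = (THE p. finite {M. p M \<noteq> 0}
     \<and> (\<forall>M. p M \<noteq> 0 \<longrightarrow> set_mset M \<subseteq> {..<m + m*n})
     \<and> (\<forall>(y::nat \<Rightarrow> int) (x::nat \<Rightarrow> int).
          hsym m ({..<m} \<times> {N. set_mset N \<subseteq> {..<m*n} \<and> size N = n})
                 (\<lambda>(i,N). y i * (\<Prod>j\<in>#N. x j))
          = ipoly_eval p (\<lambda>k. if k < m then hsym (k+1) {..<m} y
                               else hsym (k - m + 1) {..<m*n} x)))"

definition ipoly_eval_R :: "('a,'m) ring_scheme \<Rightarrow> (nat multiset \<Rightarrow> int) \<Rightarrow> (nat \<Rightarrow> 'a) \<Rightarrow> 'a" where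
  "ipoly_eval_R R p v = (\<Oplus>\<^bsub>R\<^esub> M\<in>{M. p M \<noteq> 0}.
      ([p M] \<cdot>\<^bsub>R\<^esub> \<one>\<^bsub>R\<^esub>) \<otimes>\<^bsub>R\<^esub> (\<Otimes>\<^bsub>R\<^esub> i\<in>set_mset M. v i [^]\<^bsub>R\<^esub> count M i))"

text \<open>Lambda-ring: sigma n a is the n-th coefficient of sigma_t(a).\<close>
definition lambda_ring :: "('a,'m) ring_scheme \<Rightarrow> (nat \<Rightarrow> 'a \<Rightarrow> 'a) \<Rightarrow> bool" where
  "lambda_ring R \<sigma> \<longleftrightarrow> cring R
     \<and> (\<forall>n. \<forall>a\<in>carrier R. \<sigma> n a \<in> carrier R)
     \<and> (\<forall>a\<in>carrier R. \<sigma> 0 a = \<one>\<^bsub>R\<^esub> \<and> \<sigma> 1 a = a)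
     \<and> (\<forall>n>0. \<sigma> n \<zero>\<^bsub>R\<^esub> = \<zero>\<^bsub>R\<^esub>)
     \<and> (\<forall>n. \<forall>a\<in>carrier R. \<forall>b\<in>carrier R.
          \<sigma> n (a \<oplus>\<^bsub>R\<^esub> b) = (\<Oplus>\<^bsub>R\<^esub> i\<in>{..n}. \<sigma> i a \<otimes>\<^bsub>R\<^esub> \<sigma> (n - i) b))"

definition lambda_hom :: "('a,'m) ring_scheme \<Rightarrow> (nat \<Rightarrow> 'a \<Rightarrow> 'a) \<Rightarrow>
    ('b,'n) ring_scheme \<Rightarrow> (nat \<Rightarrow> 'b \<Rightarrow> 'b) \<Rightarrow> ('a \<Rightarrow> 'b) \<Rightarrow> bool" where
  "lambda_hom R \<sigma> S \<tau> f \<longleftrightarrow> f \<in> ring_hom R S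
     \<and> (\<forall>n. \<forall>a\<in>carrier R. f (\<sigma> n a) = \<tau> n (f a))"

definition lambda_sp :: "('a,'m) ring_scheme \<Rightarrow> (nat \<Rightarrow> 'a \<Rightarrow> 'a) \<Rightarrow> 'a set" where
  "lambda_sp R \<sigma> = {a\<in>carrier R. \<forall>b\<in>carrier R. \<forall>m n.
      \<sigma> m (b \<otimes>\<^bsub>R\<^esub> \<sigma> n a)
      = ipoly_eval_R R (Pmn m n) (\<lambda>k. if k < m then \<sigma> (k+1) b else \<sigma> (k - m + 1) a)}"

definition adjoins :: "'a ring \<Rightarrow> (nat \<Rightarrow> 'a \<Rightarrow> 'a) \<Rightarrow> 'b set \<Rightarrow> ('b \<Rightarrow> 'a list) \<Rightarrow>
    'c ring \<Rightarrow> (nat \<Rightarrow> 'c \<Rightarrow> 'c) \<Rightarrow> ('a \<Rightarrow> 'c) \<Rightarrow> ('b \<Rightarrow> 'c) \<Rightarrow> bool" where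
  "adjoins R \<sigma> A P S \<tau> g y \<longleftrightarrow> lambda_ring S \<tau> \<and> lambda_hom R \<sigma> S \<tau> g
     \<and> (\<forall>\<alpha>\<in>A. y \<alpha> \<in> lambda_sp S \<tau> \<and> ring.eval S (map g (P \<alpha>)) (y \<alpha>) = \<zero>\<^bsub>S\<^esub>)"

definition factors_uniquely :: "'a ring \<Rightarrow> 'b set \<Rightarrow>
    'd ring \<Rightarrow> (nat \<Rightarrow> 'd \<Rightarrow> 'd) \<Rightarrow> ('a \<Rightarrow> 'd) \<Rightarrow> ('b \<Rightarrow> 'd) \<Rightarrow>
    'c ring \<Rightarrow> (nat \<Rightarrow> 'c \<Rightarrow> 'c) \<Rightarrow> ('a \<Rightarrow> 'c) \<Rightarrow> ('b \<Rightarrow> 'c) \<Rightarrow> bool" where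
  "factors_uniquely R A R' \<sigma>' f x S \<tau> g y \<longleftrightarrow>
    (\<exists>h. lambda_hom R' \<sigma>' S \<tau> h \<and> (\<forall>r\<in>carrier R. h (f r) = g r) \<and> (\<forall>\<alpha>\<in>A. h (x \<alpha>) = y \<alpha>)
      \<and> (\<forall>h'. lambda_hom R' \<sigma>' S \<tau> h' \<and> (\<forall>r\<in>carrier R. h' (f r) = g r)
               \<and> (\<forall>\<alpha>\<in>A. h' (x \<alpha>) = y \<alpha>) \<longrightarrow> (\<forall>z\<in>carrier R'. h' z = h z)))"

end

theory Submission
  imports Defs
begin


datatype ('a,'b) tm = Cst 'a | Var 'b | Zer | On | Add "('a,'b) tm" "('a,'b) tm"
  | Neg "('a,'b) tm" | Mul "('a,'b) tm" "('a,'b) tm" | Sig nat "('a,'b) tm"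

definition tg :: "nat \<Rightarrow> ('a + 'b) list" where
  "tg k = replicate k (Inl undefined) @ [Inr undefined]"

lemma tg_inj: "tg k @ xs = tg l @ ys \<Longrightarrow> k = l \<and> xs = ys"
proof (induction k arbitrary: l)
  case 0 then show ?case by (cases l) (auto simp: tg_def)
next
  case (Suc k) then show ?case by (cases l) (auto simp: tg_def)
qed

fun enc :: "('a,'b) tm \<Rightarrow> ('a + 'b) list" where
  "enc (Cst a) = tg 0 @ [Inl a]"
| "enc (Var b) = tg 1 @ [Inr b]"
| "enc Zer = tg 2"
| "enc On = tg 3"
| "enc (Add t u) = tg 4 @ enc t @ enc u"
| "enc (Neg t) = tg 5 @ enc t"
| "enc (Mul t u) = tg 6 @ enc t @ enc u"
| "enc (Sig n t) = tg 7 @ tg n @ enc t"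

lemma tg_inj': "tg k @ xs = tg l @ ys \<longleftrightarrow> k = l \<and> xs = ys"
  using tg_inj by blast

lemma tg_inj0: "tg k = tg l @ ys \<longleftrightarrow> k = l \<and> ys = []"
  using tg_inj[of k "[]" l ys] by auto

lemma tg_inj1: "tg k @ xs = tg l \<longleftrightarrow> k = l \<and> xs = []"
  using tg_inj[of k xs l "[]"] by auto

lemma tg_inj2: "tg k = tg l \<longleftrightarrow> k = l"
  using tg_inj[of k "[]" l "[]"] by auto


lemmas tgs = tg_inj' tg_inj0 tg_inj1 tg_inj2 append_assoc

lemma enc_app_inj: "enc t @ xs = enc u @ ys \<Longrightarrow> t = u \<and> xs = ys"
proof (induction t arbitrary: u xs ys)
  case (Add t1 t2)
  show ?case
  proof (cases u)
    case (Add u1 u2)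
    with Add.prems have "enc t1 @ (enc t2 @ xs) = enc u1 @ (enc u2 @ ys)" by (simp add: tgs)
    with Add.IH(1) have "t1 = u1" "enc t2 @ xs = enc u2 @ ys" by blast+
    with Add.IH(2) show ?thesis using \<open>u = _\<close> by blast
  qed (use Add.prems in \<open>simp_all add: tgs\<close>)
next
  case (Mul t1 t2)
  show ?case
  proof (cases u)
    case (Mul u1 u2)
    with Mul.prems have "enc t1 @ (enc t2 @ xs) = enc u1 @ (enc u2 @ ys)" by (simp add: tgs)
    with Mul.IH(1) have "t1 = u1" "enc t2 @ xs = enc u2 @ ys" by blast+
    with Mul.IH(2) show ?thesis using \<open>u = _\<close> by blast
  qed (use Mul.prems in \<open>simp_all add: tgs\<close>)
next
  case (Neg t1)
  show ?case
  proof (cases u)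
    case (Neg u1)
    with Neg.prems have "enc t1 @ xs = enc u1 @ ys" by (simp add: tgs)
    with Neg.IH show ?thesis using \<open>u = _\<close> by blast
  qed (use Neg.prems in \<open>simp_all add: tgs\<close>)
next
  case (Sig n t1)
  show ?case
  proof (cases u)
    case (Sig m u1)
    with Sig.prems have "n = m" "enc t1 @ xs = enc u1 @ ys" by (simp_all add: tgs)
    with Sig.IH show ?thesis using \<open>u = _\<close> by blast
  qed (use Sig.prems in \<open>simp_all add: tgs\<close>)
qed (case_tac u; simp add: tgs)+

lemma inj_enc: "inj enc"
  by (rule injI) (use enc_app_inj[of _ "[]" _ "[]"] in auto)




lemma hom_nat_one:
  assumes "ring_hom_ring R S h"
  shows "h ([(n::nat)] \<cdot>\<^bsub>R\<^esub> \<one>\<^bsub>R\<^esub>) = [n] \<cdot>\<^bsub>S\<^esub> \<one>\<^bsub>S\<^esub>"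
proof -
  interpret ring_hom_ring R S h by fact
  show ?thesis by (induction n) (simp_all add: R.add.nat_pow_Suc S.add.nat_pow_Suc)
qed

lemma hom_int_one:
  assumes "ring_hom_ring R S h"
  shows "h ([(k::int)] \<cdot>\<^bsub>R\<^esub> \<one>\<^bsub>R\<^esub>) = [k] \<cdot>\<^bsub>S\<^esub> \<one>\<^bsub>S\<^esub>"
proof -
  interpret ring_hom_ring R S h by fact
  show ?thesis
  proof (cases "k \<ge> 0")
    case True then show ?thesis
      using hom_nat_one[OF assms] by (simp add: add_pow_int_ge)
  next
    case False then show ?thesis
      using hom_nat_one[OF assms] by (simp add: add_pow_int_lt)
  qed
qed

lemma ipoly_hom:
  assumes "ring_hom_cring R S h" and v: "\<And>k. v k \<in> carrier R"
  shows "h (ipoly_eval_R R p v) = ipoly_eval_R S p (h \<circ> v)"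
proof -
  interpret ring_hom_cring R S h by fact
  have rr: "ring_hom_ring R S h" by unfold_locales
  define F where "F = (\<lambda>M. ([p M] \<cdot>\<^bsub>R\<^esub> \<one>\<^bsub>R\<^esub>) \<otimes>\<^bsub>R\<^esub> (\<Otimes>\<^bsub>R\<^esub>i\<in>set_mset M. v i [^]\<^bsub>R\<^esub> count M i))"
  define G where "G = (\<lambda>M. ([p M] \<cdot>\<^bsub>S\<^esub> \<one>\<^bsub>S\<^esub>) \<otimes>\<^bsub>S\<^esub> (\<Otimes>\<^bsub>S\<^esub>i\<in>set_mset M. (h \<circ> v) i [^]\<^bsub>S\<^esub> count M i))"
  have cl: "\<And>M. (\<Otimes>\<^bsub>R\<^esub>i\<in>set_mset M. v i [^]\<^bsub>R\<^esub> count M i) \<in> carrier R"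
    using v by (auto intro!: R.finprod_closed R.nat_pow_closed)
  have FG: "(h \<circ> F) M = G M" for M
  proof -
    have "h (\<Otimes>\<^bsub>R\<^esub>i\<in>set_mset M. v i [^]\<^bsub>R\<^esub> count M i) = (\<Otimes>\<^bsub>S\<^esub> i\<in>set_mset M. (h \<circ> v) i [^]\<^bsub>S\<^esub> count M i)"
      using v by (subst hom_finprod) (auto simp: Pi_def intro!: S.finprod_cong' ring.hom_nat_pow)
    then show ?thesis unfolding F_def G_def
      using cl hom_int_one[OF rr] by (simp add: R.add.int_pow_closed)
  qed
  have "h (ipoly_eval_R R p v) = finsum S (h \<circ> F) {M. p M \<noteq> 0}"
    unfolding ipoly_eval_R_def F_def using cl by (intro hom_finsum) (auto simp: Pi_def)
  also have "\<dots> = finsum S G {M. p M \<noteq> 0}"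
    by (rule S.finsum_cong') (auto simp: FG[unfolded comp_def] G_def Pi_def v intro!: S.m_closed S.finprod_closed S.add.int_pow_closed)
  also have "\<dots> = ipoly_eval_R S p (h \<circ> v)"
    unfolding ipoly_eval_R_def G_def ..
  finally show ?thesis .
qed




locale pb =
  fixes R :: "'a ring" and \<sigma> :: "nat \<Rightarrow> 'a \<Rightarrow> 'a" and A :: "'b set" and P :: "'b \<Rightarrow> 'a list"
    and Q :: "'q ring" and \<sigma>Q :: "nat \<Rightarrow> 'q \<Rightarrow> 'q" and f :: "'a \<Rightarrow> 'q" and x :: "'b \<Rightarrow> 'q"
    and ng :: "'q \<Rightarrow> 'q"
    and I :: "'i set" and M :: "'i \<Rightarrow> 'm ring" and \<tau> :: "'i \<Rightarrow> nat \<Rightarrow> 'm \<Rightarrow> 'm"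
    and g :: "'i \<Rightarrow> 'a \<Rightarrow> 'm" and y :: "'i \<Rightarrow> 'b \<Rightarrow> 'm" and h :: "'i \<Rightarrow> 'q \<Rightarrow> 'm"
  assumes lrR: "lambda_ring R \<sigma>"
    and models: "\<And>i. i \<in> I \<Longrightarrow> adjoins R \<sigma> A P (M i) (\<tau> i) (g i) (y i)"
    and Pcar: "\<And>\<alpha>. \<alpha> \<in> A \<Longrightarrow> set (P \<alpha>) \<subseteq> carrier R"
    and zc: "\<zero>\<^bsub>Q\<^esub> \<in> carrier Q" and oc: "\<one>\<^bsub>Q\<^esub> \<in> carrier Q"
    and ac: "\<And>U V. U \<in> carrier Q \<Longrightarrow> V \<in> carrier Q \<Longrightarrow> U \<oplus>\<^bsub>Q\<^esub> V \<in> carrier Q"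
    and mc: "\<And>U V. U \<in> carrier Q \<Longrightarrow> V \<in> carrier Q \<Longrightarrow> U \<otimes>\<^bsub>Q\<^esub> V \<in> carrier Q"
    and nc: "\<And>U. U \<in> carrier Q \<Longrightarrow> ng U \<in> carrier Q"
    and sc: "\<And>n U. U \<in> carrier Q \<Longrightarrow> \<sigma>Q n U \<in> carrier Q"
    and fc: "\<And>r. r \<in> carrier R \<Longrightarrow> f r \<in> carrier Q"
    and xc: "\<And>\<alpha>. \<alpha> \<in> A \<Longrightarrow> x \<alpha> \<in> carrier Q"
    and hc: "\<And>i U. i \<in> I \<Longrightarrow> U \<in> carrier Q \<Longrightarrow> h i U \<in> carrier (M i)"
    and ha: "\<And>i U V. i \<in> I \<Longrightarrow> U \<in> carrier Q \<Longrightarrow> V \<in> carrier Q \<Longrightarrow>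
              h i (U \<oplus>\<^bsub>Q\<^esub> V) = h i U \<oplus>\<^bsub>M i\<^esub> h i V"
    and hm: "\<And>i U V. i \<in> I \<Longrightarrow> U \<in> carrier Q \<Longrightarrow> V \<in> carrier Q \<Longrightarrow>
              h i (U \<otimes>\<^bsub>Q\<^esub> V) = h i U \<otimes>\<^bsub>M i\<^esub> h i V"
    and hz: "\<And>i. i \<in> I \<Longrightarrow> h i \<zero>\<^bsub>Q\<^esub> = \<zero>\<^bsub>M i\<^esub>"
    and ho: "\<And>i. i \<in> I \<Longrightarrow> h i \<one>\<^bsub>Q\<^esub> = \<one>\<^bsub>M i\<^esub>"
    and hn: "\<And>i U. i \<in> I \<Longrightarrow> U \<in> carrier Q \<Longrightarrow> h i (ng U) = \<ominus>\<^bsub>M i\<^esub> h i U"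
    and hs: "\<And>i n U. i \<in> I \<Longrightarrow> U \<in> carrier Q \<Longrightarrow> h i (\<sigma>Q n U) = \<tau> i n (h i U)"
    and hf: "\<And>i r. i \<in> I \<Longrightarrow> r \<in> carrier R \<Longrightarrow> h i (f r) = g i r"
    and hx: "\<And>i \<alpha>. i \<in> I \<Longrightarrow> \<alpha> \<in> A \<Longrightarrow> h i (x \<alpha>) = y i \<alpha>"
    and inj: "\<And>U V. U \<in> carrier Q \<Longrightarrow> V \<in> carrier Q \<Longrightarrow> (\<And>i. i \<in> I \<Longrightarrow> h i U = h i V) \<Longrightarrow> U = V"
begin

lemma lrM: "i \<in> I \<Longrightarrow> lambda_ring (M i) (\<tau> i)"
  using models by (simp add: adjoins_def)
lemma crM: "i \<in> I \<Longrightarrow> cring (M i)"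
  using lrM by (simp add: lambda_ring_def)
lemma lhM: "i \<in> I \<Longrightarrow> lambda_hom R \<sigma> (M i) (\<tau> i) (g i)"
  using models by (simp add: adjoins_def)
lemma yM: "i \<in> I \<Longrightarrow> \<alpha> \<in> A \<Longrightarrow> y i \<alpha> \<in> lambda_sp (M i) (\<tau> i)
   \<and> ring.eval (M i) (map (g i) (P \<alpha>)) (y i \<alpha>) = \<zero>\<^bsub>M i\<^esub>"
  using models by (simp add: adjoins_def)

lemmas hsimps = ha hm hz ho hn hs hc ac mc nc sc zc oc

lemma cringQ: "cring Q"
proof (rule cringI)
  show "abelian_group Q"
  proof (rule abelian_groupI)
    fix U V W assume c: "U \<in> carrier Q" "V \<in> carrier Q" "W \<in> carrier Q"
    show "U \<oplus>\<^bsub>Q\<^esub> V \<oplus>\<^bsub>Q\<^esub> W = U \<oplus>\<^bsub>Q\<^esub> (V \<oplus>\<^bsub>Q\<^esub> W)"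
      by (rule inj) (use c in \<open>simp_all add: hsimps cring.cring_simprules[OF crM]\<close>)
  next
    fix U V assume c: "U \<in> carrier Q" "V \<in> carrier Q"
    show "U \<oplus>\<^bsub>Q\<^esub> V = V \<oplus>\<^bsub>Q\<^esub> U"
      by (rule inj) (use c in \<open>simp_all add: hsimps cring.cring_simprules[OF crM]\<close>)
  next
    fix U assume c: "U \<in> carrier Q"
    show "\<zero>\<^bsub>Q\<^esub> \<oplus>\<^bsub>Q\<^esub> U = U"
      by (rule inj) (use c in \<open>simp_all add: hsimps cring.cring_simprules[OF crM]\<close>)
  next
    fix U assume c: "U \<in> carrier Q"
    have "ng U \<oplus>\<^bsub>Q\<^esub> U = \<zero>\<^bsub>Q\<^esub>"
      by (rule inj) (use c in \<open>simp_all add: hsimps cring.cring_simprules[OF crM]\<close>)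
    then show "\<exists>V\<in>carrier Q. V \<oplus>\<^bsub>Q\<^esub> U = \<zero>\<^bsub>Q\<^esub>" using c nc by blast
  qed (simp_all add: ac zc)
next
  show "comm_monoid Q"
  proof (rule comm_monoidI)
    fix U V W assume c: "U \<in> carrier Q" "V \<in> carrier Q" "W \<in> carrier Q"
    show "U \<otimes>\<^bsub>Q\<^esub> V \<otimes>\<^bsub>Q\<^esub> W = U \<otimes>\<^bsub>Q\<^esub> (V \<otimes>\<^bsub>Q\<^esub> W)"
      by (rule inj) (use c in \<open>simp_all add: hsimps cring.cring_simprules[OF crM]\<close>)
  next
    fix U V assume c: "U \<in> carrier Q" "V \<in> carrier Q"
    show "U \<otimes>\<^bsub>Q\<^esub> V = V \<otimes>\<^bsub>Q\<^esub> U"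
      by (rule inj) (use c in \<open>simp_all add: hsimps cring.cring_simprules[OF crM]\<close>)
  next
    fix U assume c: "U \<in> carrier Q"
    show "\<one>\<^bsub>Q\<^esub> \<otimes>\<^bsub>Q\<^esub> U = U"
      by (rule inj) (use c in \<open>simp_all add: hsimps cring.cring_simprules[OF crM]\<close>)
  qed (simp_all add: mc oc)
next
  fix U V W assume c: "U \<in> carrier Q" "V \<in> carrier Q" "W \<in> carrier Q"
  show "(U \<oplus>\<^bsub>Q\<^esub> V) \<otimes>\<^bsub>Q\<^esub> W = U \<otimes>\<^bsub>Q\<^esub> W \<oplus>\<^bsub>Q\<^esub> V \<otimes>\<^bsub>Q\<^esub> W"
    by (rule inj) (use c in \<open>simp_all add: hsimps cring.cring_simprules[OF crM]\<close>)
qed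

lemma homQ: "i \<in> I \<Longrightarrow> ring_hom_cring Q (M i) (h i)"
  by (rule ring_hom_cringI[OF cringQ crM]) (auto intro!: ring_hom_memI simp: hsimps)


lemma lrQ: "lambda_ring Q \<sigma>Q"
  unfolding lambda_ring_def
proof (intro conjI ballI allI impI)
  show "cring Q" by (rule cringQ)
  interpret Q: cring Q by (rule cringQ)
  show "\<sigma>Q n a \<in> carrier Q" if "a \<in> carrier Q" for n a using sc that .
  show "\<sigma>Q 0 a = \<one>\<^bsub>Q\<^esub>" if "a \<in> carrier Q" for a
    by (rule inj) (use that lrM in \<open>simp_all add: hsimps lambda_ring_def\<close>)
  show "\<sigma>Q 1 a = a" if "a \<in> carrier Q" for a
    by (rule inj) (use that lrM in \<open>simp_all add: hsimps lambda_ring_def\<close>)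
  show "\<sigma>Q n \<zero>\<^bsub>Q\<^esub> = \<zero>\<^bsub>Q\<^esub>" if "n > 0" for n
    by (rule inj) (use that lrM in \<open>simp_all add: hsimps lambda_ring_def\<close>)
  show "\<sigma>Q n (a \<oplus>\<^bsub>Q\<^esub> b) = (\<Oplus>\<^bsub>Q\<^esub>i\<in>{..n}. \<sigma>Q i a \<otimes>\<^bsub>Q\<^esub> \<sigma>Q (n - i) b)"
    if ab: "a \<in> carrier Q" "b \<in> carrier Q" for n a b
  proof (rule inj)
    fix i assume i: "i \<in> I"
    interpret H: ring_hom_cring Q "M i" "h i" by (rule homQ[OF i])
    have "h i (\<Oplus>\<^bsub>Q\<^esub>k\<in>{..n}. \<sigma>Q k a \<otimes>\<^bsub>Q\<^esub> \<sigma>Q (n - k) b)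
        = (\<Oplus>\<^bsub>M i\<^esub>k\<in>{..n}. (h i \<circ> (\<lambda>k. \<sigma>Q k a \<otimes>\<^bsub>Q\<^esub> \<sigma>Q (n - k) b)) k)"
      by (rule H.hom_finsum) (use ab in \<open>auto simp: hsimps\<close>)
    also have "\<dots> = (\<Oplus>\<^bsub>M i\<^esub>k\<in>{..n}. \<tau> i k (h i a) \<otimes>\<^bsub>M i\<^esub> \<tau> i (n - k) (h i b))"
      by (rule H.S.finsum_cong') (use ab lrM[OF i] i in \<open>auto simp: hsimps lambda_ring_def Pi_def\<close>)
    also have "\<dots> = \<tau> i n (h i a \<oplus>\<^bsub>M i\<^esub> h i b)"
      using lrM[OF i] ab by (simp add: lambda_ring_def hsimps i)
    finally show "h i (\<sigma>Q n (a \<oplus>\<^bsub>Q\<^esub> b)) = h i (\<Oplus>\<^bsub>Q\<^esub>i\<in>{..n}. \<sigma>Q i a \<otimes>\<^bsub>Q\<^esub> \<sigma>Q (n - i) b)"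
      using ab by (simp add: hsimps i)
  qed (use ab in \<open>auto simp: hsimps intro!: Q.finsum_closed\<close>)
qed

lemma lhQ: "lambda_hom R \<sigma> Q \<sigma>Q f"
  unfolding lambda_hom_def
proof (intro conjI ballI allI)
  have crR: "cring R" using lrR by (simp add: lambda_ring_def)
  interpret R: cring R by (rule crR)
  have gh: "i \<in> I \<Longrightarrow> g i \<in> ring_hom R (M i)" for i using lhM by (simp add: lambda_hom_def)
  show "f \<in> ring_hom R Q"
  proof (rule ring_hom_memI)
    show "f (r \<otimes>\<^bsub>R\<^esub> s) = f r \<otimes>\<^bsub>Q\<^esub> f s" if "r \<in> carrier R" "s \<in> carrier R" for r s
      by (rule inj) (use that gh in \<open>simp_all add: hsimps fc hf ring_hom_mult\<close>)
    show "f (r \<oplus>\<^bsub>R\<^esub> s) = f r \<oplus>\<^bsub>Q\<^esub> f s" if "r \<in> carrier R" "s \<in> carrier R" for r s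
      by (rule inj) (use that gh in \<open>simp_all add: hsimps fc hf ring_hom_add\<close>)
    show "f \<one>\<^bsub>R\<^esub> = \<one>\<^bsub>Q\<^esub>"
      by (rule inj) (use gh in \<open>simp_all add: hsimps fc hf ring_hom_one\<close>)
  qed (rule fc)
  show "f (\<sigma> n r) = \<sigma>Q n (f r)" if "r \<in> carrier R" for n r
  proof (rule inj)
    fix i assume i: "i \<in> I"
    have "\<sigma> n r \<in> carrier R" using lrR that by (simp add: lambda_ring_def)
    then show "h i (f (\<sigma> n r)) = h i (\<sigma>Q n (f r))"
      using lhM[OF i] that i by (simp add: hsimps fc hf lambda_hom_def)
  qed (use that lrR in \<open>auto simp: fc sc lambda_ring_def\<close>)
qed

lemma spQ: "\<alpha> \<in> A \<Longrightarrow> x \<alpha> \<in> lambda_sp Q \<sigma>Q"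
  unfolding lambda_sp_def
proof (intro CollectI conjI ballI allI)
  assume \<alpha>: "\<alpha> \<in> A"
  show "x \<alpha> \<in> carrier Q" using xc \<alpha> .
  fix b m n assume b: "b \<in> carrier Q"
  let ?v = "\<lambda>k. if k < m then \<sigma>Q (k + 1) b else \<sigma>Q (k - m + 1) (x \<alpha>)"
  have vc: "?v k \<in> carrier Q" for k using b xc[OF \<alpha>] by (simp add: sc)
  interpret Q: cring Q by (rule cringQ)
  show "\<sigma>Q m (b \<otimes>\<^bsub>Q\<^esub> \<sigma>Q n (x \<alpha>)) = ipoly_eval_R Q (Pmn m n) ?v"
  proof (rule inj)
    fix i assume i: "i \<in> I"
    have sp: "y i \<alpha> \<in> lambda_sp (M i) (\<tau> i)" using yM[OF i \<alpha>] by simp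
    have hb: "h i b \<in> carrier (M i)" using hc[OF i b] .
    have "h i (ipoly_eval_R Q (Pmn m n) ?v) = ipoly_eval_R (M i) (Pmn m n) (h i \<circ> ?v)"
      by (rule ipoly_hom[OF homQ[OF i] vc])
    also have "h i \<circ> ?v = (\<lambda>k. if k < m then \<tau> i (k + 1) (h i b) else \<tau> i (k - m + 1) (y i \<alpha>))"
      using b xc[OF \<alpha>] i \<alpha> by (auto simp: hsimps hx)
    also have "ipoly_eval_R (M i) (Pmn m n) \<dots> = \<tau> i m (h i b \<otimes>\<^bsub>M i\<^esub> \<tau> i n (y i \<alpha>))"
      using sp hb unfolding lambda_sp_def by auto
    finally show "h i (\<sigma>Q m (b \<otimes>\<^bsub>Q\<^esub> \<sigma>Q n (x \<alpha>))) = h i (ipoly_eval_R Q (Pmn m n) ?v)"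
      using b xc[OF \<alpha>] i \<alpha> by (simp add: hsimps hx)
  next
    show "ipoly_eval_R Q (Pmn m n) ?v \<in> carrier Q"
      unfolding ipoly_eval_R_def using vc
      by (auto intro!: Q.finsum_closed Q.m_closed Q.finprod_closed Q.add.int_pow_closed simp: Pi_def)
  qed (use b xc[OF \<alpha>] in \<open>simp add: hsimps\<close>)
qed

lemma evQ: "\<alpha> \<in> A \<Longrightarrow> ring.eval Q (map f (P \<alpha>)) (x \<alpha>) = \<zero>\<^bsub>Q\<^esub>"
proof -
  assume \<alpha>: "\<alpha> \<in> A"
  interpret Q: cring Q by (rule cringQ)
  have sub: "set (map f (P \<alpha>)) \<subseteq> carrier Q" using Pcar[OF \<alpha>] fc by auto
  show ?thesis
  proof (rule inj)
    fix i assume i: "i \<in> I"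
    interpret H: ring_hom_cring Q "M i" "h i" by (rule homQ[OF i])
    have "h i (Q.eval (map f (P \<alpha>)) (x \<alpha>)) = ring.eval (M i) (map (h i) (map f (P \<alpha>))) (h i (x \<alpha>))"
      by (rule H.ring.eval_hom'[OF xc[OF \<alpha>] sub])
    also have "map (h i) (map f (P \<alpha>)) = map (g i) (P \<alpha>)"
      using Pcar[OF \<alpha>] i by (auto simp: hf)
    finally show "h i (Q.eval (map f (P \<alpha>)) (x \<alpha>)) = h i \<zero>\<^bsub>Q\<^esub>"
      using yM[OF i \<alpha>] i \<alpha> by (simp add: hx hz)
  qed (use sub xc[OF \<alpha>] in \<open>simp_all add: Q.eval_in_carrier\<close>)
qed

lemma negQ: "U \<in> carrier Q \<Longrightarrow> \<ominus>\<^bsub>Q\<^esub> U = ng U"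
proof -
  assume c: "U \<in> carrier Q"
  interpret Q: cring Q by (rule cringQ)
  have "ng U \<oplus>\<^bsub>Q\<^esub> U = \<zero>\<^bsub>Q\<^esub>"
    by (rule inj) (use c in \<open>simp_all add: hsimps cring.cring_simprules[OF crM]\<close>)
  then show ?thesis using c nc by (simp add: Q.minus_equality)
qed

theorem adjQ: "adjoins R \<sigma> A P Q \<sigma>Q f x"
  unfolding adjoins_def using lrQ lhQ spQ evQ by blast

end



primrec ev :: "'a ring \<Rightarrow> 'b set \<Rightarrow> 'c ring \<Rightarrow> (nat \<Rightarrow> 'c \<Rightarrow> 'c) \<Rightarrow> ('a \<Rightarrow> 'c) \<Rightarrow> ('b \<Rightarrow> 'c)
    \<Rightarrow> ('a,'b) tm \<Rightarrow> 'c" where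
  "ev R A S \<tau> g y (Cst a) = (if a \<in> carrier R then g a else \<zero>\<^bsub>S\<^esub>)"
| "ev R A S \<tau> g y (Var b) = (if b \<in> A then y b else \<zero>\<^bsub>S\<^esub>)"
| "ev R A S \<tau> g y Zer = \<zero>\<^bsub>S\<^esub>"
| "ev R A S \<tau> g y On = \<one>\<^bsub>S\<^esub>"
| "ev R A S \<tau> g y (Add t u) = ev R A S \<tau> g y t \<oplus>\<^bsub>S\<^esub> ev R A S \<tau> g y u"
| "ev R A S \<tau> g y (Neg t) = \<ominus>\<^bsub>S\<^esub> ev R A S \<tau> g y t"
| "ev R A S \<tau> g y (Mul t u) = ev R A S \<tau> g y t \<otimes>\<^bsub>S\<^esub> ev R A S \<tau> g y u"
| "ev R A S \<tau> g y (Sig n t) = \<tau> n (ev R A S \<tau> g y t)"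

lemma ev_closed:
  assumes "adjoins R \<sigma> A P S \<tau> g y"
  shows "ev R A S \<tau> g y t \<in> carrier S"
proof -
  have lr: "lambda_ring S \<tau>" and lh: "lambda_hom R \<sigma> S \<tau> g"
    and sp: "\<forall>\<alpha>\<in>A. y \<alpha> \<in> lambda_sp S \<tau>" using assms by (auto simp: adjoins_def)
  interpret S: cring S using lr by (simp add: lambda_ring_def)
  have gh: "g \<in> ring_hom R S" using lh by (simp add: lambda_hom_def)
  show ?thesis
    by (induction t) (use lr sp gh in \<open>auto simp: lambda_ring_def lambda_sp_def ring_hom_closed\<close>)
qed

definition dec :: "('a + 'b) list \<Rightarrow> ('a,'b) tm" where "dec = inv_into UNIV enc"

lemma dec_enc[simp]: "dec (enc t) = t"
  unfolding dec_def by (rule inv_into_f_f[OF inj_enc UNIV_I])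

locale adjctx =
  fixes R :: "'a ring" and \<sigma> :: "nat \<Rightarrow> 'a \<Rightarrow> 'a" and A :: "'b set" and P :: "'b \<Rightarrow> 'a list"
  assumes lrR: "lambda_ring R \<sigma>"
    and Psp: "\<forall>\<alpha>\<in>A. set (P \<alpha>) \<subseteq> lambda_sp R \<sigma>"
begin

lemma Pcar: "\<alpha> \<in> A \<Longrightarrow> set (P \<alpha>) \<subseteq> carrier R"
  using Psp by (auto simp: lambda_sp_def)

definition tmeq :: "('a,'b) tm \<Rightarrow> ('a,'b) tm \<Rightarrow> bool" where
  "tmeq t u \<longleftrightarrow> (\<forall>(S :: ('a + 'b) list ring) \<tau> g y. adjoins R \<sigma> A P S \<tau> g y \<longrightarrow>
      ev R A S \<tau> g y t = ev R A S \<tau> g y u)"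

definition canon :: "('a,'b) tm \<Rightarrow> ('a,'b) tm" where
  "canon t = (SOME u. tmeq t u)"

definition cls :: "('a,'b) tm \<Rightarrow> ('a + 'b) list" where
  "cls t = enc (canon t)"

lemma tmeq_canon: "tmeq t (canon t)"
  unfolding canon_def by (rule someI[of _ t]) (simp add: tmeq_def)

lemma cls_eq: "cls t = cls u \<longleftrightarrow> tmeq t u"
proof
  assume "cls t = cls u"
  then have "canon t = canon u" unfolding cls_def using inj_enc by (auto dest: injD)
  then show "tmeq t u" using tmeq_canon[of t] tmeq_canon[of u] by (auto simp: tmeq_def)
next
  assume e: "tmeq t u"
  have "(\<lambda>v. tmeq t v) = (\<lambda>v. tmeq u v)"
    using e by (auto simp: tmeq_def fun_eq_iff)
  then show "cls t = cls u" unfolding cls_def canon_def by simp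
qed

lemma dec_cls[simp]: "dec (cls t) = canon t"
  by (simp add: cls_def)

lemma ev_canon_T: "adjoins R \<sigma> A P (S :: ('a + 'b) list ring) \<tau> g y \<Longrightarrow>
    ev R A S \<tau> g y (canon t) = ev R A S \<tau> g y t"
  using tmeq_canon[of t] by (auto simp: tmeq_def)


lemma sound:
  fixes S :: "'c ring"
  assumes adj: "adjoins R \<sigma> A P S \<tau> g y" and e: "tmeq t u"
  shows "ev R A S \<tau> g y t = ev R A S \<tau> g y u"
proof -
  let ?e = "ev R A S \<tau> g y"
  define H where "H = range ?e"
  define \<phi> :: "'c \<Rightarrow> ('a + 'b) list" where "\<phi> s = enc (SOME t. ?e t = s)" for s
  define \<psi> where "\<psi> U = ?e (dec U)" for U
  have eH: "?e s \<in> H" for s by (simp add: H_def)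
  have \<psi>\<phi>: "\<psi> (\<phi> s) = s" if "s \<in> H" for s
  proof -
    from that obtain t where "?e t = s" by (auto simp: H_def)
    then have "?e (SOME t. ?e t = s) = s" by (rule someI)
    then show ?thesis by (simp add: \<psi>_def \<phi>_def)
  qed
  have Hc: "s \<in> H \<Longrightarrow> s \<in> carrier S" for s using ev_closed[OF adj] by (auto simp: H_def)
  have H0: "\<zero>\<^bsub>S\<^esub> \<in> H" using eH[of Zer] by simp
  have H1: "\<one>\<^bsub>S\<^esub> \<in> H" using eH[of On] by simp
  have Ha: "a \<oplus>\<^bsub>S\<^esub> b \<in> H" if "a \<in> H" "b \<in> H" for a b
  proof -
    from that obtain t u where "a = ?e t" "b = ?e u" by (auto simp: H_def)
    then show ?thesis using eH[of "Add t u"] by simp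
  qed
  have Hm: "a \<otimes>\<^bsub>S\<^esub> b \<in> H" if "a \<in> H" "b \<in> H" for a b
  proof -
    from that obtain t u where "a = ?e t" "b = ?e u" by (auto simp: H_def)
    then show ?thesis using eH[of "Mul t u"] by simp
  qed
  have Hn: "\<ominus>\<^bsub>S\<^esub> a \<in> H" if "a \<in> H" for a
  proof -
    from that obtain t where "a = ?e t" by (auto simp: H_def)
    then show ?thesis using eH[of "Neg t"] by simp
  qed
  have Hs: "\<tau> n a \<in> H" if "a \<in> H" for n a
  proof -
    from that obtain t where "a = ?e t" by (auto simp: H_def)
    then show ?thesis using eH[of "Sig n t"] by simp
  qed
  have Hg: "g r \<in> H" if "r \<in> carrier R" for r using eH[of "Cst r"] that by simp
  have Hy: "y \<alpha> \<in> H" if "\<alpha> \<in> A" for \<alpha> using eH[of "Var \<alpha>"] that by simp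
  define S' :: "('a + 'b) list ring" where "S' = \<lparr>carrier = \<phi> ` H,
     mult = \<lambda>U V. \<phi> (\<psi> U \<otimes>\<^bsub>S\<^esub> \<psi> V), one = \<phi> \<one>\<^bsub>S\<^esub>, zero = \<phi> \<zero>\<^bsub>S\<^esub>,
     add = \<lambda>U V. \<phi> (\<psi> U \<oplus>\<^bsub>S\<^esub> \<psi> V)\<rparr>"
  define \<sigma>' where "\<sigma>' n U = \<phi> (\<tau> n (\<psi> U))" for n U
  define f' where "f' r = \<phi> (g r)" for r
  define x' where "x' \<alpha> = \<phi> (y \<alpha>)" for \<alpha>
  define ng where "ng U = \<phi> (\<ominus>\<^bsub>S\<^esub> \<psi> U)" for U
  have cS': "carrier S' = \<phi> ` H" by (simp add: S'_def)
  have \<psi>H: "U \<in> carrier S' \<Longrightarrow> \<psi> U \<in> H" for U using \<psi>\<phi> by (auto simp: cS')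
  interpret P': pb R \<sigma> A P S' \<sigma>' f' x' ng "UNIV :: unit set" "\<lambda>_. S" "\<lambda>_. \<tau>" "\<lambda>_. g" "\<lambda>_. y" "\<lambda>_. \<psi>"
  proof unfold_locales
    show "lambda_ring R \<sigma>" by (rule lrR)
    show "adjoins R \<sigma> A P S \<tau> g y" by (rule adj)
    show "set (P \<alpha>) \<subseteq> carrier R" if "\<alpha> \<in> A" for \<alpha> using Pcar that .
  next
    fix U V assume "U \<in> carrier S'" "V \<in> carrier S'" "(\<And>i. i \<in> (UNIV::unit set) \<Longrightarrow> \<psi> U = \<psi> V)"
    then show "U = V" using \<psi>\<phi> by (auto simp: cS')
  qed (auto simp: S'_def \<sigma>'_def f'_def x'_def ng_def \<psi>\<phi> H0 H1 Ha Hm Hn Hs Hg Hy Hc \<psi>H[unfolded cS'])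
  have adj': "adjoins R \<sigma> A P S' \<sigma>' f' x'" by (rule P'.adjQ)
  have negS': "\<ominus>\<^bsub>S'\<^esub> (\<phi> a) = \<phi> (\<ominus>\<^bsub>S\<^esub> a)" if "a \<in> H" for a
    using P'.negQ[of "\<phi> a"] that by (simp add: cS' ng_def \<psi>\<phi>)
  have evS': "ev R A S' \<sigma>' f' x' s = \<phi> (?e s)" for s
    by (induction s) (simp_all add: negS'[unfolded S'_def] S'_def \<sigma>'_def f'_def x'_def \<psi>\<phi> eH)
  have "ev R A S' \<sigma>' f' x' t = ev R A S' \<sigma>' f' x' u" using e adj' unfolding tmeq_def by blast
  then have "\<phi> (?e t) = \<phi> (?e u)" by (simp add: evS')
  then have "\<psi> (\<phi> (?e t)) = \<psi> (\<phi> (?e u))" by simp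
  then show ?thesis using \<psi>\<phi> eH by simp
qed


definition QQ :: "('a + 'b) list ring" where
  "QQ = \<lparr>carrier = range cls, mult = \<lambda>U V. cls (Mul (dec U) (dec V)), one = cls On,
      zero = cls Zer, add = \<lambda>U V. cls (Add (dec U) (dec V))\<rparr>"
definition \<sigma>Q where "\<sigma>Q n U = cls (Sig n (dec U))"
definition fQ where "fQ r = cls (Cst r)"
definition xQ where "xQ \<alpha> = cls (Var \<alpha>)"
definition ngQ where "ngQ U = cls (Neg (dec U))"

definition II :: "(('a + 'b) list ring \<times> (nat \<Rightarrow> ('a + 'b) list \<Rightarrow> ('a + 'b) list)
     \<times> ('a \<Rightarrow> ('a + 'b) list) \<times> ('b \<Rightarrow> ('a + 'b) list)) set" where
  "II = {i. adjoins R \<sigma> A P (fst i) (fst (snd i)) (fst (snd (snd i))) (snd (snd (snd i)))}"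
definition hh where
  "hh i U = ev R A (fst i) (fst (snd i)) (fst (snd (snd i))) (snd (snd (snd i))) (dec U)"

lemma cls_Add: "cls (Add (canon t) (canon u)) = cls (Add t u)"
  by (simp add: cls_eq tmeq_def ev_canon_T)
lemma cls_Mul: "cls (Mul (canon t) (canon u)) = cls (Mul t u)"
  by (simp add: cls_eq tmeq_def ev_canon_T)
lemma cls_Neg: "cls (Neg (canon t)) = cls (Neg t)"
  by (simp add: cls_eq tmeq_def ev_canon_T)
lemma cls_Sig: "cls (Sig n (canon t)) = cls (Sig n t)"
  by (simp add: cls_eq tmeq_def ev_canon_T)

lemma QQ_simps:
  "carrier QQ = range cls"
  "cls t \<oplus>\<^bsub>QQ\<^esub> cls u = cls (Add t u)"
  "cls t \<otimes>\<^bsub>QQ\<^esub> cls u = cls (Mul t u)"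
  "\<zero>\<^bsub>QQ\<^esub> = cls Zer"
  "\<one>\<^bsub>QQ\<^esub> = cls On"
  "\<sigma>Q n (cls t) = cls (Sig n t)"
  "ngQ (cls t) = cls (Neg t)"
  by (simp_all add: QQ_def \<sigma>Q_def ngQ_def cls_Add cls_Mul cls_Sig cls_Neg)

lemma hh_cls: "i \<in> II \<Longrightarrow> hh i (cls s) = ev R A (fst i) (fst (snd i)) (fst (snd (snd i))) (snd (snd (snd i))) s"
  by (simp add: hh_def II_def ev_canon_T)

lemma pbQ: "pb R \<sigma> A P QQ \<sigma>Q fQ xQ ngQ II fst (\<lambda>i. fst (snd i)) (\<lambda>i. fst (snd (snd i))) (\<lambda>i. snd (snd (snd i))) hh"
proof unfold_locales
  show "lambda_ring R \<sigma>" by (rule lrR)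
  show "set (P \<alpha>) \<subseteq> carrier R" if "\<alpha> \<in> A" for \<alpha> using Pcar that .
  show "adjoins R \<sigma> A P (fst i) (fst (snd i)) (fst (snd (snd i))) (snd (snd (snd i)))" if "i \<in> II" for i
    using that by (simp add: II_def)
  fix i U assume i: "i \<in> II" and U: "U \<in> carrier QQ"
  then show "hh i U \<in> carrier (fst i)" using ev_closed by (auto simp: II_def hh_def)
next
  fix U V assume U: "U \<in> carrier QQ" and V: "V \<in> carrier QQ"
    and e: "\<And>i. i \<in> II \<Longrightarrow> hh i U = hh i V"
  from U V obtain t u where tu: "U = cls t" "V = cls u" by (auto simp: QQ_simps)
  have "tmeq t u" unfolding tmeq_def
  proof (intro allI impI)
    fix S \<tau> g y assume a: "adjoins R \<sigma> A P (S :: ('a + 'b) list ring) \<tau> g y"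
    then have "(S, \<tau>, g, y) \<in> II" by (simp add: II_def)
    from e[OF this] show "ev R A S \<tau> g y t = ev R A S \<tau> g y u" using a tu
      by (simp add: hh_def ev_canon_T)
  qed
  then show "U = V" using tu cls_eq by simp
qed (auto simp: QQ_simps hh_cls hh_def II_def fQ_def xQ_def \<sigma>Q_def ngQ_def QQ_def ev_canon_T)

lemma adjQQ: "adjoins R \<sigma> A P QQ \<sigma>Q fQ xQ"
  by (rule pb.adjQ[OF pbQ])

lemma cringQQ: "cring QQ"
  by (rule pb.cringQ[OF pbQ])

lemma univ:
  fixes S :: "'c ring"
  assumes adj: "adjoins R \<sigma> A P S \<tau> g y"
  shows "factors_uniquely R A QQ \<sigma>Q fQ xQ S \<tau> g y"
proof -
  let ?e = "ev R A S \<tau> g y"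
  define h where "h U = ?e (dec U)" for U
  have hcls: "h (cls s) = ?e s" for s
    using sound[OF adj tmeq_canon[of s]] by (simp add: h_def)
  have lr: "lambda_ring S \<tau>" and lh: "lambda_hom R \<sigma> S \<tau> g"
    using adj by (auto simp: adjoins_def)
  interpret S: cring S using lr by (simp add: lambda_ring_def)
  interpret Q: cring QQ by (rule cringQQ)
  have hl: "lambda_hom QQ \<sigma>Q S \<tau> h"
    unfolding lambda_hom_def
  proof (intro conjI ballI allI)
    show "h \<in> ring_hom QQ S"
    proof (rule ring_hom_memI)
      fix U V assume "U \<in> carrier QQ" "V \<in> carrier QQ"
      then obtain t u where tu: "U = cls t" "V = cls u" by (auto simp: QQ_simps)
      show "h (U \<otimes>\<^bsub>QQ\<^esub> V) = h U \<otimes>\<^bsub>S\<^esub> h V" using tu by (simp add: QQ_simps hcls)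
      show "h (U \<oplus>\<^bsub>QQ\<^esub> V) = h U \<oplus>\<^bsub>S\<^esub> h V" using tu by (simp add: QQ_simps hcls)
      show "h U \<in> carrier S" using tu by (simp add: hcls ev_closed[OF adj])
    qed (simp add: QQ_simps hcls)
    fix n U assume "U \<in> carrier QQ"
    then obtain t where "U = cls t" by (auto simp: QQ_simps)
    then show "h (\<sigma>Q n U) = \<tau> n (h U)" by (simp add: QQ_simps hcls)
  qed
  have hf: "\<forall>r\<in>carrier R. h (fQ r) = g r" by (simp add: fQ_def hcls)
  have hx: "\<forall>\<alpha>\<in>A. h (xQ \<alpha>) = y \<alpha>" by (simp add: xQ_def hcls)
  have uniq: "\<forall>z\<in>carrier QQ. h' z = h z"
    if h': "lambda_hom QQ \<sigma>Q S \<tau> h'" "\<forall>r\<in>carrier R. h' (fQ r) = g r" "\<forall>\<alpha>\<in>A. h' (xQ \<alpha>) = y \<alpha>" for h'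
  proof -
    have rh: "h' \<in> ring_hom QQ S" using h' by (simp add: lambda_hom_def)
    interpret H': ring_hom_cring QQ S h' by (rule ring_hom_cringI[OF cringQQ S.is_cring rh])
    have z0: "h' (cls Zer) = \<zero>\<^bsub>S\<^esub>" using H'.hom_zero by (simp add: QQ_simps)
    have ccl: "cls t \<in> carrier QQ" for t by (simp add: QQ_simps)
    have "h' (cls s) = ?e s" for s
    proof (induction s)
      case (Cst a)
      show ?case
      proof (cases "a \<in> carrier R")
        case True then show ?thesis using h'(2) by (simp add: fQ_def)
      next
        case False
        then have "cls (Cst a) = cls Zer" by (simp add: cls_eq tmeq_def)
        then show ?thesis using False z0 by simp
      qed
    next
      case (Var a)
      show ?case
      proof (cases "a \<in> A")
        case True then show ?thesis using h'(3) by (simp add: xQ_def)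
      next
        case False
        then have "cls (Var a) = cls Zer" by (simp add: cls_eq tmeq_def)
        then show ?thesis using False z0 by simp
      qed
    next
      case Zer then show ?case using z0 by simp
    next
      case On then show ?case using H'.hom_one by (simp add: QQ_simps)
    next
      case (Add t u) then show ?case
        using H'.hom_add[OF ccl ccl, of t u] by (simp add: QQ_simps)
    next
      case (Mul t u) then show ?case
        using H'.hom_mult[OF ccl ccl, of t u] by (simp add: QQ_simps)
    next
      case (Neg t)
      have "\<ominus>\<^bsub>QQ\<^esub> cls t = cls (Neg t)"
        using pb.negQ[OF pbQ ccl[of t]] by (simp add: QQ_simps)
      then show ?case using H'.hom_a_inv[OF ccl[of t]] Neg by simp
    next
      case (Sig n t) then show ?case
        using h'(1) ccl[of t] by (simp add: lambda_hom_def QQ_simps)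
    qed
    then show ?thesis using hcls by (auto simp: QQ_simps)
  qed
  show ?thesis unfolding factors_uniquely_def
    using hl hf hx uniq by blast
qed

end


theorem mainTheorem5:
  fixes R :: "'a ring" and \<sigma> :: "nat \<Rightarrow> 'a \<Rightarrow> 'a"
    and A :: "'b set" and P :: "'b \<Rightarrow> 'a list"
  assumes "lambda_ring R \<sigma>"
    and "\<forall>\<alpha>\<in>A. set (P \<alpha>) \<subseteq> lambda_sp R \<sigma>"
  shows "\<exists>(R' :: ('a + 'b) list ring) \<sigma>' f x.
     adjoins R \<sigma> A P R' \<sigma>' f x
     \<and> (\<forall>(S :: 'c ring) \<tau> g y. adjoins R \<sigma> A P S \<tau> g y \<longrightarrow>
          factors_uniquely R A R' \<sigma>' f x S \<tau> g y)
     \<and> (\<forall>(S :: ('a + 'b) list ring) \<tau> g y. adjoins R \<sigma> A P S \<tau> g y \<longrightarrow>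
          factors_uniquely R A R' \<sigma>' f x S \<tau> g y)"
proof -
  interpret adjctx R \<sigma> A P using assms by unfold_locales
  show ?thesis
    apply (rule exI[of _ QQ], rule exI[of _ \<sigma>Q], rule exI[of _ fQ], rule exI[of _ xQ])
    apply (intro conjI allI impI)
      apply (rule adjQQ)
     apply (erule univ)
    apply (erule univ)
    done
qed

end
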